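(* Let $f_A,f_R,F,d_a,d_e$ be as in the context, with $\chi=1$. There exists at most one radius $\bar R\in(0,\frac{d_e}{2}]$ such that the ring state $\delta_{(\bar R,0)}$ of radius $\bar R$ is a nontrivial equilibrium state of the mean-field equation $\partial_t\rho+\nabla\cdot[\rho\,(F(\cdot,T)\ast\rho)]=0$. If moreover $$\int_0^{\pi}(f_A+f_R)\Big(\tfrac{d_e}{2}\sqrt{(1-\cos\phi)^2+\sin^2\phi}\Big)(1-\cos\phi)\,d\phi<0,$$ then there exists a unique $\bar R\in(\frac{d_a}{2},\frac{d_e}{2}]$ such that $\delta_{(\bar R,0)}$ is a nontrivial equilibrium state.
   Context: Let $f_R, f_A:[0,\infty)\to\mathbb{R}$ be smooth integrable functions with $f_R\ge 0$ and $f_A\le 0$, such that there is $d_a>0$ with $(f_A+f_R)(\rho)\le 0$ for $\rho>d_a$ and $(f_A+f_R)(\rho)>0$ for $0\le\rho<d_a$. For $\chi\in[0,1]$, $s=(0,1)$, $l=(1,0)$, let $T=\chi\, s\otimes s + l\otimes l$ and $F(d,T) = f_A(|d|)\,T d + f_R(|d|)\,d$ for $d\in\mathbb{R}^2$; assume $F$ is $C^1$ with bounded total derivatives. Assume there is $d_e>d_a$ such that $\chi f_A+f_R$ is strictly decreasing on $[0,d_e]$ for all $\chi\in[0,1]$. A Borel probability measure $\mu$ on $\mathbb{R}^2$ is an equilibrium state if $K(x):=\int_{\mathbb{R}^2}F(x-y,T)\,d\mu(y)$ satisfies $K\in L^1_{loc}(d\mu)$ and $K=0$ on $\mathrm{supp}(\mu)$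 $\mu$-a.e. For $R>0$ the ring state $\delta_{(R,0)}$ is the uniform probability measure on the circle $\{(R\cos\phi,R\sin\phi)\}$. *)

theory Defs
  imports "HOL-Probability.Probability"
begin

definition smooth_on_real :: "real set \<Rightarrow> (real \<Rightarrow> real) \<Rightarrow> bool" where
  "smooth_on_real S f \<longleftrightarrow>
     (\<exists>D :: nat \<Rightarrow> real \<Rightarrow> real. D 0 = f \<and>
        (\<forall>n. \<forall>x\<in>S. (D n has_real_derivative D (Suc n) x) (at x within S)))"

text \<open>T = chi s(x)s + l(x)l with s = (0,1), l = (1,0); applied to d = (d1,d2) gives (d1, chi d2).\<close>
definition Tmat :: "real \<Rightarrow> real \<times> real \<Rightarrow> real \<times> real" where
  "Tmat chi d = (fst d, chi * snd d)"

definition Fint :: "(real \<Rightarrow> real) \<Rightarrow> (real \<Rightarrow> real) \<Rightarrow> real \<Rightarrow> real \<times> real \<Rightarrow> real \<times> real" where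
  "Fint fA fR chi d = fA (norm d) *\<^sub>R Tmat chi d + fR (norm d) *\<^sub>R d"

definition msupp :: "(real \<times> real) measure \<Rightarrow> (real \<times> real) set" where
  "msupp \<mu> = {x. \<forall>e>0. emeasure \<mu> (ball x e) > 0}"

definition Kfield :: "(real \<times> real \<Rightarrow> real \<times> real) \<Rightarrow> (real \<times> real) measure \<Rightarrow> real \<times> real \<Rightarrow> real \<times> real" where
  "Kfield G \<mu> x = (\<integral>y. G (x - y) \<partial>\<mu>)"

text \<open>Equilibrium state for the interaction kernel G (= F(., T)).\<close>
definition equilibrium_state :: "(real \<times> real \<Rightarrow> real \<times> real) \<Rightarrow> (real \<times> real) measure \<Rightarrow> bool" where
  "equilibrium_state G \<mu> \<longleftrightarrow>
     prob_space \<mu> \<and> sets \<mu> = sets borel \<and>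
     (\<forall>x. integrable \<mu> (\<lambda>y. G (x - y))) \<and>
     (\<forall>C. compact C \<longrightarrow> set_integrable \<mu> C (Kfield G \<mu>)) \<and>
     (AE x in \<mu>. x \<in> msupp \<mu> \<longrightarrow> Kfield G \<mu> x = 0)"

definition ring_state :: "real \<Rightarrow> (real \<times> real) measure" where
  "ring_state R = distr (uniform_measure lborel {0..2*pi}) borel (\<lambda>\<phi>. (R * cos \<phi>, R * sin \<phi>))"

end

theory Submission imports Defs begin

lemma periodic_shift:
  fixes k :: "real \<Rightarrow> real"
  assumes ck: "continuous_on UNIV k" and per: "\<And>x. k (x + 2*pi) = k x"
    and th: "0 \<le> \<theta>" "\<theta> \<le> 2*pi"
  shows "integral {0..2*pi} (\<lambda>\<phi>. k (\<phi> - \<theta>)) = integral {0..2*pi} k"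
proof -
  have int: "\<And>a b. k integrable_on {a..b}"
    using ck by (meson continuous_on_subset integrable_continuous_real subset_UNIV)
  have 1: "integral {0..2*pi} (\<lambda>\<phi>. k (\<phi> - \<theta>)) = integral {-\<theta>..2*pi-\<theta>} k"
  proof -
    have X: "integral {-\<theta> - -\<theta>..(2*pi-\<theta>) - -\<theta>} (\<lambda>x. k (x + -\<theta>)) = integral {-\<theta>..2*pi-\<theta>} k"
      by (rule integral_shift_real_ivl)
    have e: "-\<theta> - -\<theta> = 0" "(2*pi-\<theta>) - -\<theta> = 2*pi" "(\<lambda>x. k (x + -\<theta>)) = (\<lambda>\<phi>. k (\<phi> - \<theta>))" by simp_all
    show ?thesis using X unfolding e .
  qed
  have 2: "integral {-\<theta>..2*pi-\<theta>} k = integral {-\<theta>..0} k + integral {0..2*pi-\<theta>} k"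
    using Henstock_Kurzweil_Integration.integral_combine[of "-\<theta>" 0 "2*pi-\<theta>" k] int th by simp
  have 3: "integral {-\<theta>..0} k = integral {2*pi-\<theta>..2*pi} k"
  proof -
    have X: "integral {(2*pi-\<theta>) - 2*pi..2*pi - 2*pi} (\<lambda>x. k (x + 2*pi)) = integral {2*pi-\<theta>..2*pi} k"
      by (rule integral_shift_real_ivl)
    have e: "(2*pi-\<theta>) - 2*pi = -\<theta>" "2*pi - 2*pi = (0::real)" "(\<lambda>x. k (x + 2*pi)) = k" using per by auto
    show ?thesis using X unfolding e .
  qed
  have 4: "integral {0..2*pi-\<theta>} k + integral {2*pi-\<theta>..2*pi} k = integral {0..2*pi} k"
    using Henstock_Kurzweil_Integration.integral_combine[of 0 "2*pi-\<theta>" "2*pi" k] int th by simp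
  show ?thesis using 1 2 3 4 by linarith
qed

lemma reflect_split:
  fixes m :: "real \<Rightarrow> real"
  assumes cm: "continuous_on UNIV m"
  shows "integral {0..2*pi} m = integral {0..pi} m + integral {0..pi} (\<lambda>s. m (2*pi - s))"
proof -
  have int: "\<And>a b. m integrable_on {a..b}"
    using cm by (meson continuous_on_subset integrable_continuous_real subset_UNIV)
  have 1: "integral {0..2*pi} m = integral {0..pi} m + integral {pi..2*pi} m"
    using Henstock_Kurzweil_Integration.integral_combine[of 0 pi "2*pi" m] int by simp
  have 2: "integral {pi..2*pi} m = integral {-(2*pi)..-pi} (\<lambda>x. m (-x))"
    using Henstock_Kurzweil_Integration.integral_reflect_real[where b="2*pi" and a=pi and f=m] by (simp only:)
  have 3: "integral {-(2*pi)..-pi} (\<lambda>x. m (-x)) = integral {0..pi} (\<lambda>s. m (2*pi - s))"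
  proof -
    have X: "integral {0 - 2*pi..pi - 2*pi} (\<lambda>x. (\<lambda>s. m (2*pi - s)) (x + 2*pi)) = integral {0..pi} (\<lambda>s. m (2*pi - s))"
      by (rule integral_shift_real_ivl)
    have e: "0 - 2*pi = -(2*pi)" "pi - 2*pi = -pi" "(\<lambda>x. (\<lambda>s. m (2*pi - s)) (x + 2*pi)) = (\<lambda>x. m (-x))" by auto
    show ?thesis using X unfolding e .
  qed
  show ?thesis using 1 2 3 by linarith
qed

abbreviation Umeas :: "real measure" where "Umeas \<equiv> uniform_measure lborel {0..2*pi}"

lemma emU: "emeasure lborel {0..2*pi} = ennreal (2*pi)"
  using emeasure_lborel_Icc[of 0 "2*pi"] by simp

lemma U_density: "Umeas = density lborel (\<lambda>x. ennreal (indicator {0..2*pi} x / (2*pi)))"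
proof -
  have "(\<lambda>x. indicator {0..2*pi} x / emeasure lborel {0..2*pi}) = (\<lambda>x. ennreal (indicator {0..2*pi} x / (2*pi)))"
  proof
    fix x :: real
    note e = emU
    show "indicator {0..2*pi} x / emeasure lborel {0..2*pi} = ennreal (indicator {0..2*pi} x / (2*pi))"
      unfolding e using divide_ennreal[of 1 "2*pi"] pi_gt_zero by (cases "x \<in> {0..2*pi}") simp_all
  qed
  then show ?thesis unfolding uniform_measure_def by (simp only:)
qed

lemma U_prob: "prob_space Umeas"
proof -
  have a: "ennreal (2*pi) \<noteq> 0" "ennreal (2*pi) \<noteq> \<infinity>" by simp_all
  show ?thesis by (rule prob_space_uniform_measure) (simp_all only: emU a not_False_eq_True)
qed

lemma p_meas: "(\<lambda>\<phi>::real. (R * cos \<phi>, R * sin \<phi>)) \<in> measurable Umeas borel"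
proof -
  have "(\<lambda>\<phi>::real. (R * cos \<phi>, R * sin \<phi>)) \<in> borel_measurable borel"
    by (intro borel_measurable_continuous_onI continuous_intros)
  moreover have "measurable Umeas (borel::(real\<times>real) measure) = measurable borel borel"
    by (rule measurable_cong_sets) simp_all
  ultimately show ?thesis by simp
qed

lemma ring_prob: "prob_space (ring_state R)"
  unfolding ring_state_def by (rule prob_space.prob_space_distr[OF U_prob p_meas])

lemma ring_sets: "sets (ring_state R) = sets borel"
  unfolding ring_state_def by simp

lemma ring_integral:
  fixes f :: "real \<times> real \<Rightarrow> 'b::euclidean_space"
  assumes cf: "continuous_on UNIV f"
  shows "integrable (ring_state R) f"
    "integral\<^sup>L (ring_state R) f = (1/(2*pi)) *\<^sub>R integral {0..2*pi} (\<lambda>\<phi>. f (R * cos \<phi>, R * sin \<phi>))"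
proof -
  let ?p = "\<lambda>\<phi>::real. (R * cos \<phi>, R * sin \<phi>)"
  let ?h = "\<lambda>\<phi>. f (?p \<phi>)"
  let ?A = "{0..2*pi::real}"
  have fm: "f \<in> borel_measurable borel" using cf by (rule borel_measurable_continuous_onI)
  have ch: "continuous_on UNIV ?h"
    by (rule continuous_on_compose2[OF cf]) (auto intro!: continuous_intros)
  have hm: "?h \<in> borel_measurable lborel"
    using borel_measurable_continuous_onI[OF ch] by (simp only: measurable_lborel2)
  have gm: "(\<lambda>x::real. indicator ?A x / (2*pi)) \<in> borel_measurable lborel" by simp
  have ic: "integrable lborel (\<lambda>x. indicator ?A x *\<^sub>R ?h x)"
    by (rule borel_integrable_compact) (auto intro: continuous_on_subset[OF ch])
  have eqf: "(\<lambda>x. (indicator ?A x / (2*pi)) *\<^sub>R ?h x) = (\<lambda>x. (1/(2*pi)) *\<^sub>R (indicator ?A x *\<^sub>R ?h x))"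
    by (auto simp: indicator_def)
  have iU: "integrable Umeas ?h"
    unfolding U_density
    apply (subst integrable_density[OF hm gm])
     apply simp
    unfolding eqf using ic by (rule integrable_scaleR_right)
  show "integrable (ring_state R) f"
    unfolding ring_state_def
    by (subst integrable_distr_eq[OF p_meas fm]) (rule iU)
  have "integral\<^sup>L (ring_state R) f = integral\<^sup>L Umeas ?h"
    unfolding ring_state_def by (rule integral_distr[OF p_meas fm])
  also have "\<dots> = integral\<^sup>L lborel (\<lambda>x. (indicator ?A x / (2*pi)) *\<^sub>R ?h x)"
    unfolding U_density by (rule integral_density[OF hm gm]) simp
  also have "\<dots> = (1/(2*pi)) *\<^sub>R integral\<^sup>L lborel (\<lambda>x. indicator ?A x *\<^sub>R ?h x)"
    by (subst eqf) (rule integral_scaleR_right)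
  also have "integral\<^sup>L lborel (\<lambda>x. indicator ?A x *\<^sub>R ?h x) = integral ?A ?h"
    using set_borel_integral_eq_integral(2)[of ?A ?h] ic
    unfolding set_integrable_def set_lebesgue_integral_def by simp
  finally show "integral\<^sup>L (ring_state R) f = (1/(2*pi)) *\<^sub>R integral {0..2*pi} ?h" .
qed

definition Sf :: "real \<Rightarrow> real" where "Sf t = sqrt ((1 - cos t)\<^sup>2 + (sin t)\<^sup>2)"

lemma Sf_sq: fixes t :: real shows "(1 - cos t)\<^sup>2 + (sin t)\<^sup>2 = 2 - 2 * cos t"
proof -
  have "sin t * sin t = 1 - cos t * cos t" using sin_squared_eq[of t] by (simp add: power2_eq_square)
  then show ?thesis by (simp add: power2_eq_square algebra_simps)
qed

lemma Sf_nonneg: "0 \<le> Sf t" unfolding Sf_def by simp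

lemma Sf_cont: "continuous_on UNIV Sf"
  unfolding Sf_def by (intro continuous_intros)

lemma Sf_refl: "Sf (2*pi - s) = Sf s"
  unfolding Sf_def by (simp add: cos_diff sin_diff)

lemma per_cos: "cos (x + 2*pi) = cos x" and per_sin: "sin (x + 2*pi) = sin x"
  by (simp_all add: cos_add sin_add)

lemma Sf_per: "Sf (x + 2*pi) = Sf x"
  unfolding Sf_def by (simp only: per_cos per_sin)

lemma norm_diff_circle:
  assumes R: "R > 0"
  shows "norm ((R * cos th, R * sin th) - (R * cos ph, R * sin ph)) = R * Sf (ph - th)"
proof -
  have c: "cos (ph - th) = cos ph * cos th + sin ph * sin th" by (rule cos_diff)
  have s1: "sin th * sin th = 1 - cos th * cos th" "sin ph * sin ph = 1 - cos ph * cos ph"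
    using sin_squared_eq[of th] sin_squared_eq[of ph] by (simp_all add: power2_eq_square)
  have "(R * cos th - R * cos ph)\<^sup>2 + (R * sin th - R * sin ph)\<^sup>2 = R\<^sup>2 * (2 - 2 * cos (ph - th))"
    unfolding c using s1 by (simp add: power2_eq_square algebra_simps s1)
  also have "\<dots> = R\<^sup>2 * ((1 - cos (ph - th))\<^sup>2 + (sin (ph - th))\<^sup>2)" by (simp only: Sf_sq)
  finally have e: "(R * cos th - R * cos ph)\<^sup>2 + (R * sin th - R * sin ph)\<^sup>2 = R\<^sup>2 * ((1 - cos (ph - th))\<^sup>2 + (sin (ph - th))\<^sup>2)" .
  have "norm ((R * cos th, R * sin th) - (R * cos ph, R * sin ph)) = sqrt ((R * cos th - R * cos ph)\<^sup>2 + (R * sin th - R * sin ph)\<^sup>2)"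
    by (simp add: norm_Pair)
  also have "\<dots> = sqrt (R\<^sup>2) * Sf (ph - th)" unfolding e Sf_def by (simp only: real_sqrt_mult)
  also have "sqrt (R\<^sup>2) = R" using R by simp
  finally show ?thesis .
qed

lemma diff_circle:
  "(R * cos th, R * sin th) - (R * cos ph, R * sin ph) =
   R *\<^sub>R ((1 - cos (ph - th)) *\<^sub>R (cos th, sin th) + sin (ph - th) *\<^sub>R (sin th, - cos th))"
proof -
  have c: "cos (ph - th) = cos ph * cos th + sin ph * sin th" by (rule cos_diff)
  have s: "sin (ph - th) = sin ph * cos th - cos ph * sin th" by (rule sin_diff)
  have s1: "sin th * sin th = 1 - cos th * cos th"
    using sin_squared_eq[of th] by (simp_all add: power2_eq_square)
  have a: "R * cos th - R * cos ph = R * ((1 - cos (ph - th)) * cos th + sin (ph - th) * sin th)"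
    unfolding c s using s1 by (simp add: power2_eq_square algebra_simps s1)
  have b: "R * sin th - R * sin ph = R * ((1 - cos (ph - th)) * sin th + sin (ph - th) * (- cos th))"
    unfolding c s using s1 by (simp add: power2_eq_square algebra_simps s1)
  show ?thesis using a b by (simp add: prod_eq_iff)
qed

lemma cos_refl: "cos (2*pi - s) = cos s" and sin_refl: "sin (2*pi - s) = - sin s"
  by (simp_all add: cos_diff sin_diff)

lemma integral_scaleR_const:
  fixes a :: "real \<Rightarrow> real" and u :: "'b::euclidean_space"
  assumes "a integrable_on S"
  shows "integral S (\<lambda>x. a x *\<^sub>R u) = integral S a *\<^sub>R u"
  using integral_unique[OF has_integral_scaleR_left[OF integrable_integral[OF assms]]] .

lemma K_ring:
  fixes g :: "real \<Rightarrow> real"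
  assumes gc: "continuous_on {0..} g" and R: "R > 0" and th: "0 \<le> \<theta>" "\<theta> \<le> 2*pi"
  shows "Kfield (\<lambda>d. g (norm d) *\<^sub>R d) (ring_state R) (R * cos \<theta>, R * sin \<theta>)
         = (R * integral {0..pi} (\<lambda>\<phi>. g (R * Sf \<phi>) * (1 - cos \<phi>)) / pi) *\<^sub>R (cos \<theta>, sin \<theta>)"
proof -
  define G where "G = (\<lambda>d::real\<times>real. g (norm d) *\<^sub>R d)"
  define cc where "cc = (\<lambda>t. g (R * Sf t))"
  define m where "m = (\<lambda>t. cc t * (1 - cos t))"
  define n where "n = (\<lambda>t. cc t * sin t)"
  define J where "J = integral {0..pi} m"
  define x where "x = (R * cos \<theta>, R * sin \<theta>)"
  define u where "u = (cos \<theta>, sin \<theta>)"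
  define v where "v = (sin \<theta>, - cos \<theta>)"
  have Gc: "continuous_on UNIV G"
    unfolding G_def
    by (intro continuous_on_scaleR continuous_on_id continuous_on_compose2[OF gc]) (auto intro!: continuous_intros)
  have ccc: "continuous_on UNIV cc"
    unfolding cc_def
    by (rule continuous_on_compose2[OF gc]) (auto intro!: continuous_intros Sf_cont simp: Sf_nonneg R less_imp_le)
  have mc: "continuous_on UNIV m" unfolding m_def by (intro continuous_intros ccc)
  have nc: "continuous_on UNIV n" unfolding n_def by (intro continuous_intros ccc)
  have mi: "\<And>a b c. (\<lambda>t. m (t - c)) integrable_on {a..b}"
    by (rule integrable_continuous_real) (auto intro!: continuous_on_compose2[OF mc] continuous_intros)
  have ni: "\<And>a b c. (\<lambda>t. n (t - c)) integrable_on {a..b}"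
    by (rule integrable_continuous_real) (auto intro!: continuous_on_compose2[OF nc] continuous_intros)
  have fc: "continuous_on UNIV (\<lambda>y. G (x - y))"
    by (rule continuous_on_compose2[OF Gc]) (auto intro!: continuous_intros)
  have K1: "Kfield G (ring_state R) x = (1/(2*pi)) *\<^sub>R integral {0..2*pi} (\<lambda>\<phi>. G (x - (R * cos \<phi>, R * sin \<phi>)))"
    unfolding Kfield_def using ring_integral(2)[OF fc] .
  have pt: "G (x - (R * cos \<phi>, R * sin \<phi>)) = R *\<^sub>R (m (\<phi> - \<theta>) *\<^sub>R u + n (\<phi> - \<theta>) *\<^sub>R v)" for \<phi>
  proof -
    have "G (x - (R * cos \<phi>, R * sin \<phi>)) = cc (\<phi> - \<theta>) *\<^sub>R (R *\<^sub>R ((1 - cos (\<phi> - \<theta>)) *\<^sub>R u + sin (\<phi> - \<theta>) *\<^sub>R v))"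
      unfolding G_def x_def norm_diff_circle[OF R] cc_def u_def v_def
      by (subst diff_circle) (rule refl)
    also have "\<dots> = R *\<^sub>R (m (\<phi> - \<theta>) *\<^sub>R u + n (\<phi> - \<theta>) *\<^sub>R v)"
      unfolding m_def n_def by (simp add: scaleR_add_right mult.left_commute)
    finally show ?thesis .
  qed
  have I1: "integral {0..2*pi} (\<lambda>\<phi>. G (x - (R * cos \<phi>, R * sin \<phi>)))
      = R *\<^sub>R (integral {0..2*pi} (\<lambda>\<phi>. m (\<phi> - \<theta>)) *\<^sub>R u + integral {0..2*pi} (\<lambda>\<phi>. n (\<phi> - \<theta>)) *\<^sub>R v)"
  proof -
    have a1: "(\<lambda>\<phi>. m (\<phi> - \<theta>) *\<^sub>R u) integrable_on {0..2*pi}"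
      using integrable_on_scaleR_left[OF mi] by blast
    have a2: "(\<lambda>\<phi>. n (\<phi> - \<theta>) *\<^sub>R v) integrable_on {0..2*pi}"
      using integrable_on_scaleR_left[OF ni] by blast
    show ?thesis
      unfolding pt integral_cmul integral_add[OF a1 a2]
      by (simp only: integral_scaleR_const[OF mi] integral_scaleR_const[OF ni])
  qed
  have mper: "m (t + 2*pi) = m t" for t unfolding m_def cc_def by (simp only: Sf_per per_cos per_sin)
  have nper: "n (t + 2*pi) = n t" for t unfolding n_def cc_def by (simp only: Sf_per per_cos per_sin)
  have sm: "integral {0..2*pi} (\<lambda>\<phi>. m (\<phi> - \<theta>)) = integral {0..2*pi} m"
    by (rule periodic_shift[OF mc mper th])
  have sn: "integral {0..2*pi} (\<lambda>\<phi>. n (\<phi> - \<theta>)) = integral {0..2*pi} n"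
    by (rule periodic_shift[OF nc nper th])
  have rm: "integral {0..2*pi} m = 2 * J"
  proof -
    have "(\<lambda>s. m (2*pi - s)) = m" unfolding m_def cc_def by (simp only: Sf_refl cos_refl)
    then show ?thesis using reflect_split[OF mc] unfolding J_def by simp
  qed
  have rn: "integral {0..2*pi} n = 0"
  proof -
    have "(\<lambda>s. n (2*pi - s)) = (\<lambda>s. - n s)" unfolding n_def cc_def by (simp add: Sf_refl sin_refl)
    then show ?thesis using reflect_split[OF nc] by simp
  qed
  have "Kfield G (ring_state R) x = (1/(2*pi)) *\<^sub>R (R *\<^sub>R ((2*J) *\<^sub>R u + 0 *\<^sub>R v))"
    unfolding K1 I1 sm sn rm rn ..
  also have "\<dots> = (R * J / pi) *\<^sub>R u" by simp
  finally show ?thesis unfolding G_def x_def u_def J_def m_def cc_def .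
qed

lemma ring_supp:
  assumes th: "0 \<le> \<theta>" "\<theta> \<le> 2*pi"
  shows "(R * cos \<theta>, R * sin \<theta>) \<in> msupp (ring_state R)"
  unfolding msupp_def
proof (intro CollectI allI impI)
  fix e :: real assume e: "e > 0"
  define p where "p = (\<lambda>\<phi>::real. (R * cos \<phi>, R * sin \<phi>))"
  define x where "x = p \<theta>"
  define B where "B = p -` ball x e"
  have op: "open B" unfolding B_def
    by (rule continuous_open_vimage) (auto simp: p_def intro!: continuous_intros)
  have "\<theta> \<in> B" unfolding B_def x_def using e by simp
  then obtain \<delta> where d: "\<delta> > 0" "ball \<theta> \<delta> \<subseteq> B" using op open_contains_ball by blast
  define \<epsilon> where "\<epsilon> = min (\<delta>/2) pi"
  have ep: "\<epsilon> > 0" "\<epsilon> < \<delta>" "\<epsilon> \<le> pi" unfolding \<epsilon>_def using d pi_gt_zero by auto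
  define a where "a = (if \<theta> \<le> pi then \<theta> else \<theta> - \<epsilon>)"
  have sub: "{a..a+\<epsilon>} \<subseteq> {0..2*pi} \<inter> B"
  proof
    fix y assume y: "y \<in> {a..a+\<epsilon>}"
    have "\<bar>y - \<theta>\<bar> \<le> \<epsilon>" using y unfolding a_def by (auto split: if_splits)
    then have "y \<in> ball \<theta> \<delta>" using ep by (simp add: dist_real_def abs_minus_commute)
    moreover have "0 \<le> y" "y \<le> 2*pi" using y th ep unfolding a_def by (auto split: if_splits)
    ultimately show "y \<in> {0..2*pi} \<inter> B" using d by auto
  qed
  have Bs: "B \<in> sets lborel" using op by simp
  have "ennreal \<epsilon> = emeasure lborel {a..a+\<epsilon>}" using ep by simp
  also have "\<dots> \<le> emeasure lborel ({0..2*pi} \<inter> B)"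
    by (rule emeasure_mono[OF sub]) (use Bs in auto)
  finally have pos: "0 < emeasure lborel ({0..2*pi} \<inter> B)"
    using ep by (metis ennreal_less_zero_iff order_less_le_trans)
  have pm: "p \<in> measurable Umeas borel" unfolding p_def by (rule p_meas)
  have "emeasure (ring_state R) (ball x e) = emeasure Umeas (p -` ball x e \<inter> space Umeas)"
    unfolding ring_state_def p_def[symmetric] by (rule emeasure_distr[OF pm]) simp
  also have "\<dots> = emeasure Umeas B" unfolding B_def by simp
  also have "\<dots> = emeasure lborel ({0..2*pi} \<inter> B) / emeasure lborel {0..2*pi}"
    by (rule emeasure_uniform_measure) (use Bs in auto)
  finally have "emeasure (ring_state R) (ball x e) = emeasure lborel ({0..2*pi} \<inter> B) / ennreal (2*pi)"
    unfolding emU .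
  then show "emeasure (ring_state R) (ball (R * cos \<theta>, R * sin \<theta>) e) > 0"
    using pos unfolding x_def p_def by (simp add: ennreal_zero_less_divide)
qed

lemma eq_iff:
  fixes g :: "real \<Rightarrow> real"
  assumes gc: "continuous_on {0..} g" and R: "R > 0"
  shows "equilibrium_state (\<lambda>d. g (norm d) *\<^sub>R d) (ring_state R)
     \<longleftrightarrow> integral {0..pi} (\<lambda>\<phi>. g (R * Sf \<phi>) * (1 - cos \<phi>)) = 0"
proof -
  define G where "G = (\<lambda>d::real\<times>real. g (norm d) *\<^sub>R d)"
  define J where "J = integral {0..pi} (\<lambda>\<phi>. g (R * Sf \<phi>) * (1 - cos \<phi>))"
  define K where "K = Kfield G (ring_state R)"
  define p where "p = (\<lambda>\<phi>::real. (R * cos \<phi>, R * sin \<phi>))"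
  have Kr: "K (p \<theta>) = (R * J / pi) *\<^sub>R (cos \<theta>, sin \<theta>)" if "0 \<le> \<theta>" "\<theta> \<le> 2*pi" for \<theta>
    unfolding K_def G_def J_def p_def by (rule K_ring[OF gc R that])
  have pm: "p \<in> measurable Umeas borel" unfolding p_def by (rule p_meas)
  have Gc: "continuous_on UNIV G"
    unfolding G_def
    by (intro continuous_on_scaleR continuous_on_id continuous_on_compose2[OF gc]) (auto intro!: continuous_intros)
  have ne: "(cos \<theta>, sin \<theta>) \<noteq> (0::real\<times>real)" for \<theta>
  proof
    assume "(cos \<theta>, sin \<theta>) = (0::real\<times>real)"
    then have "cos \<theta> = 0" "sin \<theta> = 0" by (simp_all add: zero_prod_def)
    then show False using sin_cos_squared_add[of \<theta>] by simp
  qed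
  show ?thesis unfolding J_def[symmetric]
  proof
    assume eq: "equilibrium_state (\<lambda>d. g (norm d) *\<^sub>R d) (ring_state R)"
    then have ae: "AE x in ring_state R. x \<in> msupp (ring_state R) \<longrightarrow> K x = 0"
      unfolding equilibrium_state_def K_def G_def by blast
    have ae1: "AE \<phi> in Umeas. p \<phi> \<in> msupp (ring_state R) \<longrightarrow> K (p \<phi>) = 0"
      using AE_distrD[OF pm] ae unfolding ring_state_def p_def by blast
    have ae2: "AE \<phi> in Umeas. \<phi> \<in> {0..2*pi}"
      by (rule AE_uniform_measureI) auto
    have A: "AE \<phi> in Umeas. \<phi> \<in> {0..2*pi} \<and> (p \<phi> \<in> msupp (ring_state R) \<longrightarrow> K (p \<phi>) = 0)"
      using ae1 ae2 by eventually_elim auto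
    have ex: "\<exists>\<phi>. \<phi> \<in> {0..2*pi} \<and> (p \<phi> \<in> msupp (ring_state R) \<longrightarrow> K (p \<phi>) = 0)"
    proof (rule ccontr)
      assume n: "\<not> ?thesis"
      have "AE \<phi> in Umeas. False" using A by (rule eventually_mono) (use n in blast)
      then show False using prob_space.AE_False[OF U_prob] by simp
    qed
    then obtain \<phi> where ph: "\<phi> \<in> {0..2*pi}" "p \<phi> \<in> msupp (ring_state R) \<longrightarrow> K (p \<phi>) = 0"
      by blast
    have ph1: "0 \<le> \<phi>" "\<phi> \<le> 2*pi" using ph(1) by auto
    have "p \<phi> \<in> msupp (ring_state R)" unfolding p_def by (rule ring_supp[OF ph1])
    then have "K (p \<phi>) = 0" using ph(2) by blast
    moreover have "K (p \<phi>) = (R * J / pi) *\<^sub>R (cos \<phi>, sin \<phi>)" by (rule Kr[OF ph1])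
    ultimately have "(R * J / pi) *\<^sub>R (cos \<phi>, sin \<phi>) = 0" by simp
    then have "R * J / pi = 0" using ne[of \<phi>] scaleR_eq_0_iff by blast
    then show "J = 0" using R by simp
  next
    assume J0: "J = 0"
    have Kz: "K (p \<theta>) = 0" if "0 \<le> \<theta>" "\<theta> \<le> 2*pi" for \<theta> using Kr[OF that] J0 by (simp add: zero_prod_def)
    have Kfor: "K x = (1/(2*pi)) *\<^sub>R integral (cbox 0 (2*pi)) (\<lambda>\<phi>. G (x - p \<phi>))" for x
    proof -
      have fc: "continuous_on UNIV (\<lambda>y. G (x - y))"
        by (rule continuous_on_compose2[OF Gc]) (auto intro!: continuous_intros)
      show ?thesis unfolding K_def Kfield_def p_def using ring_integral(2)[OF fc] by simp
    qed
    have Kc: "continuous_on UNIV K"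
    proof -
      have H: "continuous_on (UNIV \<times> cbox 0 (2*pi)) (\<lambda>z. G (fst z - p (snd z)))"
        unfolding p_def
        by (rule continuous_on_compose2[OF Gc]) (auto intro!: continuous_intros)
      have "continuous_on UNIV (\<lambda>x. integral (cbox 0 (2*pi)) (\<lambda>\<phi>. G (x - p \<phi>)))"
        by (rule integral_continuous_on_param) (use H in \<open>simp add: case_prod_unfold\<close>)
      then show ?thesis unfolding Kfor by (intro continuous_intros)
    qed
    have Km: "K \<in> borel_measurable borel" using Kc by (rule borel_measurable_continuous_onI)
    interpret P: prob_space "ring_state R" by (rule ring_prob)
    have ae: "AE x in ring_state R. K x = 0"
    proof -
      have S: "{x \<in> space borel. K x = 0} \<in> sets borel"
      proof -
        have "K -` {0} \<inter> space borel \<in> sets borel" by (rule measurable_sets[OF Km]) simp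
        moreover have "K -` {0} \<inter> space borel = {x \<in> space borel. K x = 0}" by auto
        ultimately show ?thesis by simp
      qed
      have "AE \<phi> in Umeas. K (p \<phi>) = 0"
        by (rule AE_uniform_measureI) (auto intro!: AE_I2 Kz)
      then show ?thesis unfolding ring_state_def p_def[symmetric]
        by (subst AE_distr_iff[OF pm S])
    qed
    have si: "set_integrable (ring_state R) C K" if C: "compact C" for C
    proof -
      have "compact (K ` C)" by (rule compact_continuous_image[OF continuous_on_subset[OF Kc] C]) simp
      then obtain B where B: "B > 0" "\<forall>y\<in>K ` C. norm y \<le> B"
        using compact_imp_bounded bounded_pos by metis
      have bd: "norm (indicator C x *\<^sub>R K x) \<le> B" for x
        using B by (cases "x \<in> C") auto
      have Cs: "C \<in> sets borel" using C by (simp add: compact_imp_closed)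
      have m: "(\<lambda>x. indicator C x *\<^sub>R K x) \<in> borel_measurable borel"
        by (intro borel_measurable_scaleR borel_measurable_indicator Cs Km)
      have m2: "(\<lambda>x. indicator C x *\<^sub>R K x) \<in> borel_measurable (ring_state R)"
        by (subst measurable_cong_sets[OF ring_sets refl]) (rule m)
      show ?thesis unfolding set_integrable_def
        by (rule P.integrable_const_bound[OF AE_I2[OF bd] m2])
    qed
    have ii: "integrable (ring_state R) (\<lambda>y. G (x - y))" for x
    proof -
      have fc: "continuous_on UNIV (\<lambda>y. G (x - y))"
        by (rule continuous_on_compose2[OF Gc]) (auto intro!: continuous_intros)
      show ?thesis by (rule ring_integral(1)[OF fc])
    qed
    show "equilibrium_state (\<lambda>d. g (norm d) *\<^sub>R d) (ring_state R)"
      unfolding equilibrium_state_def G_def[symmetric] K_def[symmetric]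
      using ring_prob ring_sets ii si ae by (auto elim: eventually_mono)
  qed
qed

definition Jf :: "(real \<Rightarrow> real) \<Rightarrow> real \<Rightarrow> real" where
  "Jf g R = integral {0..pi} (\<lambda>\<phi>. g (R * Sf \<phi>) * (1 - cos \<phi>))"

lemma cos_bounds:
  assumes "0 < \<phi>" "\<phi> < pi"
  shows "cos \<phi> < 1" "-1 < cos \<phi>"
  using cos_monotone_0_pi[of 0 \<phi>] cos_monotone_0_pi[of \<phi> pi] assms by auto

lemma Sf_pos: assumes "0 < \<phi>" "\<phi> < pi" shows "0 < Sf \<phi>"
proof -
  have "0 < 2 - 2 * cos \<phi>" using cos_bounds[OF assms] by simp
  then show ?thesis unfolding Sf_def Sf_sq by simp
qed

lemma Sf_lt2: assumes "0 < \<phi>" "\<phi> < pi" shows "Sf \<phi> < 2"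
proof -
  have "2 - 2 * cos \<phi> < 4" using cos_bounds[OF assms] by simp
  then have "sqrt (2 - 2 * cos \<phi>) < sqrt 4" by (rule real_sqrt_less_mono)
  then show ?thesis unfolding Sf_def Sf_sq by simp
qed

lemma pi_ivl_ne: "{0<..<pi} \<noteq> {}"
proof -
  have "pi/2 \<in> {0<..<pi}" using pi_gt_zero by simp
  then show ?thesis by blast
qed

lemma Jf_integrand_cont:
  assumes gc: "continuous_on {0..} g" and R: "R \<ge> 0"
  shows "continuous_on A (\<lambda>\<phi>. g (R * Sf \<phi>) * (1 - cos \<phi>))"
proof -
  have "continuous_on UNIV (\<lambda>\<phi>. g (R * Sf \<phi>))"
    by (rule continuous_on_compose2[OF gc]) (auto intro!: continuous_intros Sf_cont simp: Sf_nonneg R)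
  then have "continuous_on UNIV (\<lambda>\<phi>. g (R * Sf \<phi>) * (1 - cos \<phi>))" by (intro continuous_intros)
  then show ?thesis by (rule continuous_on_subset) simp
qed

lemma Jf_strict:
  assumes gc: "continuous_on {0..} g"
    and dec: "\<forall>r s. 0 \<le> r \<and> r < s \<and> s \<le> de \<longrightarrow> g s < g r"
    and R: "0 < R1" "R1 < R2" "2 * R2 \<le> de"
  shows "Jf g R2 < Jf g R1"
  unfolding Jf_def
proof (rule integral_less_real)
  show "continuous_on {0..pi} (\<lambda>\<phi>. g (R2 * Sf \<phi>) * (1 - cos \<phi>))"
    by (rule Jf_integrand_cont[OF gc]) (use R in simp)
  show "continuous_on {0..pi} (\<lambda>\<phi>. g (R1 * Sf \<phi>) * (1 - cos \<phi>))"
    by (rule Jf_integrand_cont[OF gc]) (use R in simp)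
  show "{0<..<pi} \<noteq> {}" by (rule pi_ivl_ne)
  fix \<phi> assume "\<phi> \<in> {0<..<pi}"
  then have ph: "0 < \<phi>" "\<phi> < pi" by auto
  have S: "0 < Sf \<phi>" "Sf \<phi> < 2" using Sf_pos[OF ph] Sf_lt2[OF ph] by auto
  have c: "0 < 1 - cos \<phi>" using cos_bounds[OF ph] by simp
  have "0 \<le> R1 * Sf \<phi>" using R S by simp
  moreover have "R1 * Sf \<phi> < R2 * Sf \<phi>" using R S by simp
  moreover have "R2 * Sf \<phi> \<le> de"
  proof -
    have "R2 * Sf \<phi> \<le> R2 * 2" using R S by (intro mult_left_mono) auto
    then show ?thesis using R by linarith
  qed
  ultimately have "g (R2 * Sf \<phi>) < g (R1 * Sf \<phi>)" using dec by blast
  then show "g (R2 * Sf \<phi>) * (1 - cos \<phi>) < g (R1 * Sf \<phi>) * (1 - cos \<phi>)"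
    using c by simp
qed

lemma Jf_pos:
  assumes gc: "continuous_on {0..} g"
    and near: "\<forall>r. 0 \<le> r \<and> r < da \<longrightarrow> g r > 0" and da: "da > 0"
  shows "0 < Jf g (da/2)"
proof -
  have "integral {0..pi} (\<lambda>\<phi>. 0::real) < Jf g (da/2)"
    unfolding Jf_def
  proof (rule integral_less_real)
    show "continuous_on {0..pi} (\<lambda>\<phi>. g (da / 2 * Sf \<phi>) * (1 - cos \<phi>))"
      by (rule Jf_integrand_cont[OF gc]) (use da in simp)
    show "continuous_on {0..pi} (\<lambda>\<phi>. 0::real)" by simp
    show "{0<..<pi} \<noteq> {}" by (rule pi_ivl_ne)
    fix \<phi> assume "\<phi> \<in> {0<..<pi}"
    then have ph: "0 < \<phi>" "\<phi> < pi" by auto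
    have S: "0 < Sf \<phi>" "Sf \<phi> < 2" using Sf_pos[OF ph] Sf_lt2[OF ph] by auto
    have c: "0 < 1 - cos \<phi>" using cos_bounds[OF ph] by simp
    have "0 \<le> da / 2 * Sf \<phi>" using da S by simp
    moreover have "da / 2 * Sf \<phi> < da"
    proof -
      have "da / 2 * Sf \<phi> < da / 2 * 2" using da S by (intro mult_strict_left_mono) auto
      then show ?thesis by simp
    qed
    ultimately have "g (da / 2 * Sf \<phi>) > 0" using near by blast
    then show "0 < g (da / 2 * Sf \<phi>) * (1 - cos \<phi>)" using c by simp
  qed
  then show ?thesis by simp
qed

lemma Jf_cont:
  assumes gc: "continuous_on {0..} g" and a: "0 \<le> a"
  shows "continuous_on {a..b} (Jf g)"
proof -
  have H: "continuous_on ({a..b} \<times> cbox 0 pi) (\<lambda>z::real\<times>real. g (fst z * Sf (snd z)) * (1 - cos (snd z)))"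
  proof -
    have "continuous_on ({a..b} \<times> cbox 0 pi) (\<lambda>z::real\<times>real. g (fst z * Sf (snd z)))"
      by (rule continuous_on_compose2[OF gc])
         (use a in \<open>auto intro!: continuous_intros continuous_on_compose2[OF Sf_cont] mult_nonneg_nonneg simp: Sf_nonneg\<close>)
    then show ?thesis by (intro continuous_intros)
  qed
  have E: "(\<lambda>(R, \<phi>). g (R * Sf \<phi>) * (1 - cos \<phi>)) = (\<lambda>z::real\<times>real. g (fst z * Sf (snd z)) * (1 - cos (snd z)))"
    by (rule ext) (simp add: split_beta)
  have H': "continuous_on ({a..b} \<times> cbox 0 pi) (\<lambda>(R, \<phi>). g (R * Sf \<phi>) * (1 - cos \<phi>))"
    unfolding E by (rule H)
  have "continuous_on {a..b} (\<lambda>R. integral (cbox 0 pi) (\<lambda>\<phi>. g (R * Sf \<phi>) * (1 - cos \<phi>)))"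
    by (rule integral_continuous_on_param[where f="\<lambda>R \<phi>. g (R * Sf \<phi>) * (1 - cos \<phi>)" and U="{a..b}" and a=0 and b=pi, OF H'])
  then show ?thesis unfolding Jf_def cbox_interval .
qed

lemma smooth_cont:
  assumes "smooth_on_real S f" shows "continuous_on S f"
proof -
  obtain D where D: "D 0 = f" "\<forall>n. \<forall>x\<in>S. (D n has_real_derivative D (Suc n) x) (at x within S)"
    using assms unfolding smooth_on_real_def by blast
  have "\<forall>x\<in>S. continuous (at x within S) f"
    using D DERIV_continuous by metis
  then show ?thesis by (simp add: continuous_on_eq_continuous_within)
qed

lemma Fint1: "Fint fA fR 1 = (\<lambda>d. (fA (norm d) + fR (norm d)) *\<^sub>R d)"
  by (rule ext) (simp add: Fint_def Tmat_def scaleR_add_left)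

theorem proposition3p5:
  fixes fA fR :: "real \<Rightarrow> real" and da de :: real
  assumes smooth_A: "smooth_on_real {0..} fA"
    and smooth_R: "smooth_on_real {0..} fR"
    and int_A: "set_integrable lborel {0..} fA"
    and int_R: "set_integrable lborel {0..} fR"
    and fR_nonneg: "\<forall>r\<ge>0. fR r \<ge> 0"
    and fA_nonpos: "\<forall>r\<ge>0. fA r \<le> 0"
    and da_pos: "da > 0"
    and sign_far: "\<forall>r>da. fA r + fR r \<le> 0"
    and sign_near: "\<forall>r. 0 \<le> r \<and> r < da \<longrightarrow> fA r + fR r > 0"
    and F_C1: "\<forall>chi\<in>{0..1}. \<exists>F' :: real \<times> real \<Rightarrow> ((real \<times> real) \<Rightarrow>\<^sub>L (real \<times> real)).
                 (\<forall>d. (Fint fA fR chi has_derivative blinfun_apply (F' d)) (at d)) \<and>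
                 continuous_on UNIV F' \<and> (\<exists>B. \<forall>d. norm (F' d) \<le> B)"
    and de_gt: "de > da"
    and decr: "\<forall>chi\<in>{0..1}. \<forall>r s. 0 \<le> r \<and> r < s \<and> s \<le> de \<longrightarrow>
                 chi * fA s + fR s < chi * fA r + fR r"
  shows "(\<forall>R1 R2. R1 \<in> {0<..de/2} \<and> R2 \<in> {0<..de/2} \<and>
            equilibrium_state (Fint fA fR 1) (ring_state R1) \<and>
            equilibrium_state (Fint fA fR 1) (ring_state R2) \<longrightarrow> R1 = R2)
       \<and> (integral {0..pi} (\<lambda>\<phi>. (let r = de / 2 * sqrt ((1 - cos \<phi>)\<^sup>2 + (sin \<phi>)\<^sup>2) in fA r + fR r)
              * (1 - cos \<phi>)) < 0
          \<longrightarrow> (\<exists>!R. R \<in> {da/2<..de/2} \<and> equilibrium_state (Fint fA fR 1) (ring_state R)))"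
proof -
  define g where "g = (\<lambda>r. fA r + fR r)"
  have gc: "continuous_on {0..} g"
    unfolding g_def using smooth_cont[OF smooth_A] smooth_cont[OF smooth_R] by (intro continuous_intros)
  have F1: "Fint fA fR 1 = (\<lambda>d. g (norm d) *\<^sub>R d)" unfolding Fint1 g_def ..
  have dec: "\<forall>r s. 0 \<le> r \<and> r < s \<and> s \<le> de \<longrightarrow> g s < g r"
    using decr unfolding g_def by (metis atLeastAtMost_iff mult_1 order_refl zero_le_one)
  have near: "\<forall>r. 0 \<le> r \<and> r < da \<longrightarrow> g r > 0" using sign_near unfolding g_def by blast
  have EQ: "equilibrium_state (Fint fA fR 1) (ring_state R) \<longleftrightarrow> Jf g R = 0" if "R > 0" for R
    unfolding F1 Jf_def by (rule eq_iff[OF gc that])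
  have uniq: "R1 = R2" if "0 < R1" "R1 \<le> de/2" "0 < R2" "R2 \<le> de/2" "Jf g R1 = 0" "Jf g R2 = 0" for R1 R2
  proof (rule ccontr)
    assume ne: "R1 \<noteq> R2"
    show False
    proof (cases "R1 < R2")
      case True
      then have "Jf g R2 < Jf g R1" using that by (intro Jf_strict[OF gc dec]) auto
      then show False using that by simp
    next
      case False
      then have "R2 < R1" using ne by simp
      then have "Jf g R1 < Jf g R2" using that by (intro Jf_strict[OF gc dec]) auto
      then show False using that by simp
    qed
  qed
  have part1: "\<forall>R1 R2. R1 \<in> {0<..de/2} \<and> R2 \<in> {0<..de/2} \<and>
            equilibrium_state (Fint fA fR 1) (ring_state R1) \<and>
            equilibrium_state (Fint fA fR 1) (ring_state R2) \<longrightarrow> R1 = R2"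
  proof (intro allI impI)
    fix R1 R2 assume a: "R1 \<in> {0<..de/2} \<and> R2 \<in> {0<..de/2} \<and>
            equilibrium_state (Fint fA fR 1) (ring_state R1) \<and>
            equilibrium_state (Fint fA fR 1) (ring_state R2)"
    then have "Jf g R1 = 0" "Jf g R2 = 0" using EQ by auto
    then show "R1 = R2" using a uniq by auto
  qed
  have part2: "\<exists>!R. R \<in> {da/2<..de/2} \<and> equilibrium_state (Fint fA fR 1) (ring_state R)"
    if hyp: "integral {0..pi} (\<lambda>\<phi>. (let r = de / 2 * sqrt ((1 - cos \<phi>)\<^sup>2 + (sin \<phi>)\<^sup>2) in fA r + fR r)
              * (1 - cos \<phi>)) < 0"
  proof -
    have Jde: "Jf g (de/2) < 0" using hyp unfolding Jf_def g_def Sf_def Let_def .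
    have Jda: "0 < Jf g (da/2)" by (rule Jf_pos[OF gc near da_pos])
    have "continuous_on {da/2..de/2} (Jf g)" by (rule Jf_cont[OF gc]) (use da_pos in simp)
    then obtain R where R: "da/2 \<le> R" "R \<le> de/2" "Jf g R = 0"
      using IVT2'[of "Jf g" "de/2" 0 "da/2"] Jde Jda de_gt by force
    have Rne: "R \<noteq> da/2" using R Jda by auto
    have Rpos: "R > 0" using R da_pos by simp
    show ?thesis
    proof (rule ex1I[of _ R])
      show "R \<in> {da/2<..de/2} \<and> equilibrium_state (Fint fA fR 1) (ring_state R)"
        using R Rne EQ[OF Rpos] by auto
    next
      fix R' assume a: "R' \<in> {da/2<..de/2} \<and> equilibrium_state (Fint fA fR 1) (ring_state R')"
      then have R'pos: "R' > 0" using da_pos by auto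
      then have "Jf g R' = 0" using a EQ by blast
      then show "R' = R" using uniq[of R' R] R a R'pos Rpos by auto
    qed
  qed
  show ?thesis using part1 part2 by blast
qed

end
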